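(* Let $K\ge1$ and let $h_1,\dots,h_K>0$. Let $\pi$ be a permutation of $\{1,\dots,K\}$ such that $h_{\pi(j_1)}\le h_{\pi(j_2)}$ for all $j_1\le j_2$. Define $$E_{\mathrm{STAC}}=\sum_{j=1}^K\Big(\frac{2^{j-1}}{h_{\pi(j)}}\Big)^2,\qquad E_{\mathrm{SEP}}=\frac1K\sum_{i=1}^K\sum_{j=1}^K\Big(\frac{2^{j-1}}{h_i}\Big)^2.$$ Then $E_{\mathrm{SEP}}\ge E_{\mathrm{STAC}}$, and equality holds only when $h_1=h_2=\dots=h_K$.
   Context: $h_i$ is the (real, positive) channel gain from node $i$ to the receiver. $E_{\mathrm{STAC}}$ is the total energy when node $\pi(j)$ transmits with weight $2^{j-1}$ (power $(2^{j-1}/h_{\pi(j)})^2$) for unit time; $E_{\mathrm{SEP}}$ is the total energy when each node transmits separately for time $1/K$ with power $\sum_{j}(2^{j-1}/h_i)^2$. *)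

theory Defs
  imports "HOL-Analysis.Analysis" "HOL-Combinatorics.Permutations"
begin

definition E_STAC :: "nat \<Rightarrow> (nat \<Rightarrow> real) \<Rightarrow> (nat \<Rightarrow> nat) \<Rightarrow> real" where
  "E_STAC K h \<pi> = (\<Sum>j=1..K. (2 ^ (j - 1) / h (\<pi> j))^2)"

definition E_SEP :: "nat \<Rightarrow> (nat \<Rightarrow> real) \<Rightarrow> real" where
  "E_SEP K h = (1 / real K) * (\<Sum>i=1..K. \<Sum>j=1..K. (2 ^ (j - 1) / h i)^2)"

end

theory Submission
  imports Defs
begin

lemma cheb_identity:
  fixes a x :: "nat \<Rightarrow> real"
  assumes "finite S"
  shows "(\<Sum>j\<in>S. \<Sum>k\<in>S. (a j - a k) * (x j - x k))
        = 2 * (real (card S) * (\<Sum>j\<in>S. a j * x j) - (\<Sum>j\<in>S. a j) * (\<Sum>j\<in>S. x j))"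
proof -
  have "(\<Sum>j\<in>S. \<Sum>k\<in>S. (a j - a k) * (x j - x k))
     = (\<Sum>j\<in>S. \<Sum>k\<in>S. a j * x j + a k * x k - a j * x k - a k * x j)"
    by (simp add: algebra_simps)
  also have "\<dots> = real (card S) * (\<Sum>j\<in>S. a j * x j) + real (card S) * (\<Sum>j\<in>S. a j * x j)
      - (\<Sum>j\<in>S. a j) * (\<Sum>j\<in>S. x j) - (\<Sum>j\<in>S. a j) * (\<Sum>j\<in>S. x j)"
    by (simp add: sum.distrib sum_subtractf sum_distrib_left sum_distrib_right
        sum.swap[of "\<lambda>j k. a k * x j"] algebra_simps)
  finally show ?thesis by (simp add: algebra_simps)
qed

theorem theorem4:
  fixes K :: nat and h :: "nat \<Rightarrow> real" and \<pi> :: "nat \<Rightarrow> nat"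
  assumes "K \<ge> 1"
    and "\<And>i. i \<in> {1..K} \<Longrightarrow> h i > 0"
    and "\<pi> permutes {1..K}"
    and "\<And>j1 j2. j1 \<in> {1..K} \<Longrightarrow> j2 \<in> {1..K} \<Longrightarrow> j1 \<le> j2 \<Longrightarrow> h (\<pi> j1) \<le> h (\<pi> j2)"
  shows "E_SEP K h \<ge> E_STAC K h \<pi>
    \<and> (E_SEP K h = E_STAC K h \<pi> \<longrightarrow> (\<forall>i\<in>{1..K}. \<forall>i'\<in>{1..K}. h i = h i'))"
proof -
  define S where "S = {1..K}"
  define a where "a j = ((2::real) ^ (j - 1))^2" for j :: nat
  define x where "x j = 1 / (h (\<pi> j))^2" for j
  have piS: "\<And>j. j \<in> S \<Longrightarrow> \<pi> j \<in> S" using assms(3) unfolding S_def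
    using permutes_in_image[OF assms(3)] by simp
  have hpos: "\<And>j. j \<in> S \<Longrightarrow> h (\<pi> j) > 0" using piS assms(2) unfolding S_def by simp
  have cardS: "real (card S) = real K" by (simp add: S_def)
  have stac: "E_STAC K h \<pi> = (\<Sum>j\<in>S. a j * x j)"
    unfolding E_STAC_def S_def a_def x_def by (rule sum.cong) (auto simp: power_divide)
  have "(\<Sum>i=1..K. \<Sum>j=1..K. (2 ^ (j - 1) / h i)^2)
      = (\<Sum>i\<in>S. (\<Sum>j\<in>S. a j) * (1 / (h i)^2))"
    unfolding S_def a_def by (simp add: power_divide sum_divide_distrib)
  also have "\<dots> = (\<Sum>i\<in>S. (\<Sum>j\<in>S. a j) * (1 / (h (\<pi> i))^2))"
    using sum.permute[OF assms(3)[folded S_def], of "\<lambda>i. (\<Sum>j\<in>S. a j) * (1 / (h i)^2)"]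
    by (simp add: comp_def)
  also have "\<dots> = (\<Sum>j\<in>S. a j) * (\<Sum>j\<in>S. x j)"
    unfolding x_def by (simp add: sum_distrib_left)
  finally have sep: "E_SEP K h = (\<Sum>j\<in>S. a j) * (\<Sum>j\<in>S. x j) / real K"
    unfolding E_SEP_def by simp
  have amono: "\<And>j k. j < k \<Longrightarrow> j \<in> S \<Longrightarrow> a j < a k"
  proof -
    fix j k :: nat assume "j < k" "j \<in> S"
    hence "j - 1 < k - 1" using S_def by auto
    hence "(2::real) ^ (j - 1) < 2 ^ (k - 1)" by simp
    thus "a j < a k" unfolding a_def by (simp add: power_strict_mono)
  qed
  have xmono: "\<And>j k. j \<le> k \<Longrightarrow> j \<in> S \<Longrightarrow> k \<in> S \<Longrightarrow> x k \<le> x j"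
  proof -
    fix j k assume jk: "j \<le> k" "j \<in> S" "k \<in> S"
    have "h (\<pi> j) \<le> h (\<pi> k)" using assms(4) jk S_def by blast
    moreover have "0 < h (\<pi> j)" using hpos jk by blast
    ultimately have "(h (\<pi> j))^2 \<le> (h (\<pi> k))^2" by (simp add: power_mono)
    moreover have "0 < (h (\<pi> j))^2" using \<open>0 < h (\<pi> j)\<close> by simp
    ultimately show "x k \<le> x j" unfolding x_def by (simp add: frac_le)
  qed
  have term_le: "\<And>j k. j \<in> S \<Longrightarrow> k \<in> S \<Longrightarrow> (a j - a k) * (x j - x k) \<le> 0"
  proof -
    fix j k assume jk: "j \<in> S" "k \<in> S"
    show "(a j - a k) * (x j - x k) \<le> 0"
    proof (cases "j \<le> k")
      case True
      hence "a j \<le> a k" using amono[of j k] jk by (cases "j = k") auto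
      moreover have "x k \<le> x j" using xmono True jk by blast
      ultimately show ?thesis by (simp add: mult_nonpos_nonneg)
    next
      case False
      hence "a k \<le> a j" using amono[of k j] jk by auto
      moreover have "x j \<le> x k" using xmono False jk by auto
      ultimately show ?thesis by (simp add: mult_nonneg_nonpos)
    qed
  qed
  have fin: "finite S" by (simp add: S_def)
  have D: "(\<Sum>j\<in>S. \<Sum>k\<in>S. (a j - a k) * (x j - x k)) \<le> 0"
    by (intro sum_nonpos) (simp add: term_le)
  have Kpos: "real K > 0" using assms(1) by simp
  have ineq: "real K * (\<Sum>j\<in>S. a j * x j) \<le> (\<Sum>j\<in>S. a j) * (\<Sum>j\<in>S. x j)"
    using D cheb_identity[OF fin, of a x] cardS by simp
  have part1: "E_SEP K h \<ge> E_STAC K h \<pi>"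
    unfolding sep stac using ineq Kpos by (simp add: field_simps)
  have part2: "\<forall>i\<in>{1..K}. \<forall>i'\<in>{1..K}. h i = h i'" if eq: "E_SEP K h = E_STAC K h \<pi>"
  proof -
    have "real K * (\<Sum>j\<in>S. a j * x j) = (\<Sum>j\<in>S. a j) * (\<Sum>j\<in>S. x j)"
      using eq unfolding sep stac using Kpos by (simp add: field_simps)
    hence D0: "(\<Sum>j\<in>S. \<Sum>k\<in>S. (a j - a k) * (x j - x k)) = 0"
      using cheb_identity[OF fin, of a x] cardS by simp
    have t0: "\<And>j. j \<in> S \<Longrightarrow> 0 \<le> - (\<Sum>k\<in>S. (a j - a k) * (x j - x k))"
      using term_le by (simp add: sum_nonpos)
    have "(\<Sum>j\<in>S. - (\<Sum>k\<in>S. (a j - a k) * (x j - x k))) = 0"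
      using D0 by (simp add: sum_negf)
    hence inner0: "\<forall>j\<in>S. - (\<Sum>k\<in>S. (a j - a k) * (x j - x k)) = 0"
      using sum_nonneg_eq_0_iff[OF fin, of "\<lambda>j. - (\<Sum>k\<in>S. (a j - a k) * (x j - x k))", OF t0] by simp
    have all0: "\<And>j k. j \<in> S \<Longrightarrow> k \<in> S \<Longrightarrow> (a j - a k) * (x j - x k) = 0"
    proof -
      fix j k assume jk: "j \<in> S" "k \<in> S"
      have "(\<Sum>k\<in>S. - ((a j - a k) * (x j - x k))) = 0" using inner0 jk by (simp add: sum_negf)
      moreover have t1: "\<And>k. k \<in> S \<Longrightarrow> 0 \<le> - ((a j - a k) * (x j - x k))" using term_le jk by simp
      ultimately have "\<forall>k\<in>S. - ((a j - a k) * (x j - x k)) = 0"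
        using sum_nonneg_eq_0_iff[OF fin, of "\<lambda>k. - ((a j - a k) * (x j - x k))", OF t1] by simp
      thus "(a j - a k) * (x j - x k) = 0" using jk by simp
    qed
    have xeq: "\<And>j k. j \<in> S \<Longrightarrow> k \<in> S \<Longrightarrow> x j = x k"
    proof -
      fix j k assume jk: "j \<in> S" "k \<in> S"
      show "x j = x k"
      proof (cases "j = k")
        case False
        hence "j < k \<or> k < j" by arith
        hence "a j \<noteq> a k" using amono[of j k] amono[of k j] jk by auto
        thus ?thesis using all0[OF jk] by simp
      qed simp
    qed
    have heq: "\<And>j k. j \<in> S \<Longrightarrow> k \<in> S \<Longrightarrow> h (\<pi> j) = h (\<pi> k)"
    proof -
      fix j k assume jk: "j \<in> S" "k \<in> S"
      have "1 / (h (\<pi> j))^2 = 1 / (h (\<pi> k))^2" using xeq[OF jk] unfolding x_def .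
      hence sq: "(h (\<pi> j))^2 = (h (\<pi> k))^2" by (metis divide_cancel_left zero_neq_one)
      have p1: "0 \<le> h (\<pi> j)" "0 \<le> h (\<pi> k)" using hpos[OF jk(1)] hpos[OF jk(2)] by auto
      show "h (\<pi> j) = h (\<pi> k)" using power2_eq_iff_nonneg[OF p1] sq by blast
    qed
    show ?thesis
    proof (intro ballI)
      fix i i' assume ii: "i \<in> {1..K}" "i' \<in> {1..K}"
      have pi': "inv \<pi> permutes S" using permutes_inv[OF assms(3)] unfolding S_def .
      have "inv \<pi> i \<in> S" "inv \<pi> i' \<in> S" using ii permutes_in_image[OF pi'] unfolding S_def by simp_all
      moreover have "\<pi> (inv \<pi> i) = i" "\<pi> (inv \<pi> i') = i'"
        using permutes_inverses(1)[OF assms(3)] by simp_all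
      ultimately show "h i = h i'" using heq[of "inv \<pi> i" "inv \<pi> i'"] by simp
    qed
  qed
  show ?thesis using part1 part2 by (intro conjI impI)
qed

end
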